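(* Consider $27$ real variables $x_{\kappa\kappa_A\kappa_B}$ indexed by $(\kappa,\kappa_A,\kappa_B)\in\{A,B,X\}^3$. Let $$T=\sum_{A\kappa_A\kappa_B\to B\lambda_A\lambda_B}x_{A\kappa_A\kappa_B}x_{B\lambda_A\lambda_B},\quad R=\sum_{\kappa A\kappa_B\to\lambda B\lambda_B}x_{\kappa A\kappa_B}x_{\lambda B\lambda_B},\quad S=\sum_{\kappa\kappa_A A\to\lambda\lambda_A B}x_{\kappa\kappa_A A}x_{\lambda\lambda_A B},$$ and for $\mu\in\{A,B,X\}$ let $s_\mu=\sum_{\kappa_A,\kappa_B\in\{A,B,X\}}x_{\mu\kappa_A\kappa_B}$. Then the maximum of $$s_X\,T+s_A\min\{T,R\}+s_B\min\{T,S\}$$ over all choices of non-negative reals $x_{\kappa\kappa_A\kappa_B}$ summing to one is equal to $4/27$.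
   Context: For triples $(\kappa,\kappa_A,\kappa_B),(\lambda,\lambda_A,\lambda_B)\in\{A,B,X\}^3$ write $\kappa\kappa_A\kappa_B\to\lambda\lambda_A\lambda_B$ if each of the pairs $(\kappa,\lambda)$, $(\kappa_A,\lambda_A)$, $(\kappa_B,\lambda_B)$ is one of $(A,B),(A,X),(B,X),(X,A),(X,B),(X,X)$, and moreover $(\kappa_B,\lambda_A)\neq(A,B)$. Each sum above ranges over all pairs of triples satisfying $\to$ and having the displayed fixed coordinates (e.g. in $T$ the first triple has first coordinate $A$ and the second triple has first coordinate $B$; in $R$ the second coordinates are $A$ and $B$; in $S$ the third coordinates are $A$ and $B$). *)

theory Defs
  imports Main "HOL.Real"
begin

datatype lab = LA | LB | LX

lemma UNIV_lab: "(UNIV :: lab set) = {LA, LB, LX}"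
  by (auto intro: lab.exhaust)

instance lab :: finite
  by standard (simp add: UNIV_lab)

type_synonym triple = "lab \<times> lab \<times> lab"

definition ok :: "lab \<Rightarrow> lab \<Rightarrow> bool" where
  "ok k l \<longleftrightarrow> (k, l) \<in> {(LA,LB),(LA,LX),(LB,LX),(LX,LA),(LX,LB),(LX,LX)}"

definition arrow :: "triple \<Rightarrow> triple \<Rightarrow> bool" where
  "arrow t u \<longleftrightarrow> (case t of (k, kA, kB) \<Rightarrow> case u of (l, lA, lB) \<Rightarrow>
      ok k l \<and> ok kA lA \<and> ok kB lB \<and> (kB, lA) \<noteq> (LA, LB))"

definition T_sum :: "(triple \<Rightarrow> real) \<Rightarrow> real" where
  "T_sum x = (\<Sum>(t, u) \<in> {(t, u). arrow t u \<and> fst t = LA \<and> fst u = LB}. x t * x u)"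

definition R_sum :: "(triple \<Rightarrow> real) \<Rightarrow> real" where
  "R_sum x = (\<Sum>(t, u) \<in> {(t, u). arrow t u \<and> fst (snd t) = LA \<and> fst (snd u) = LB}. x t * x u)"

definition S_sum :: "(triple \<Rightarrow> real) \<Rightarrow> real" where
  "S_sum x = (\<Sum>(t, u) \<in> {(t, u). arrow t u \<and> snd (snd t) = LA \<and> snd (snd u) = LB}. x t * x u)"

definition s_sum :: "(triple \<Rightarrow> real) \<Rightarrow> lab \<Rightarrow> real" where
  "s_sum x m = (\<Sum>kA\<in>UNIV. \<Sum>kB\<in>UNIV. x (m, kA, kB))"

definition objective :: "(triple \<Rightarrow> real) \<Rightarrow> real" where
  "objective x = s_sum x LX * T_sum x + s_sum x LA * min (T_sum x) (R_sum x)
                 + s_sum x LB * min (T_sum x) (S_sum x)"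

definition feasible :: "(triple \<Rightarrow> real) \<Rightarrow> bool" where
  "feasible x \<longleftrightarrow> (\<forall>t. 0 \<le> x t) \<and> (\<Sum>t\<in>UNIV. x t) = 1"

end

theory Submission
  imports Defs Complex_Main
begin


lemma amgm3:
  fixes A B C :: real
  assumes "0 \<le> A" "0 \<le> B" "0 \<le> C"
  shows "27*A*B*C \<le> (A+B+C)^3"
proof -
  have id: "2*((A+B+C)^3 - 27*A*B*C) = (A+B+C)*((A-B)^2+(B-C)^2+(C-A)^2)
      + 6*(A*(B-C)^2 + B*(C-A)^2 + C*(A-B)^2)"
    by (simp add: power2_eq_square power3_eq_cube algebra_simps)
  have "0 \<le> (A+B+C)*((A-B)^2+(B-C)^2+(C-A)^2)" using assms by simp
  moreover have "0 \<le> A*(B-C)^2" "0 \<le> B*(C-A)^2" "0 \<le> C*(A-B)^2" using assms by simp_all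
  ultimately have "0 \<le> 2*((A+B+C)^3 - 27*A*B*C)" unfolding id by simp
  thus ?thesis by simp
qed

lemma key1:
  fixes x y z :: real
  assumes "0 \<le> x" "0 \<le> y" "0 \<le> z"
  shows "x*y*(x+2*z) \<le> 4/27*(x+y+z)^3"
proof -
  have "27*x*(2*y)*(x+2*z) \<le> (x + 2*y + (x+2*z))^3" using amgm3[of x "2*y" "x+2*z"] assms by simp
  also have "(x + 2*y + (x+2*z))^3 = 8*(x+y+z)^3" by (simp add: power3_eq_cube algebra_simps)
  finally show ?thesis by simp
qed

lemma key2:
  fixes q P :: real
  assumes "0 \<le> q" "0 \<le> P"
  shows "q*P^2 \<le> 4/27*(q+P)^3"
proof -
  have "27*(2*q)*P*P \<le> (2*q + P + P)^3" using amgm3[of "2*q" P P] assms by simp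
  also have "(2*q + P + P)^3 = 8*(q+P)^3" by (simp add: power3_eq_cube algebra_simps)
  finally have h: "27*(2*q)*P*P \<le> 8*(q+P)^3" .
  have "q*P^2 = (27*(2*q)*P*P)/54" by (simp add: power2_eq_square)
  thus ?thesis using h by linarith
qed

lemma cornerK1:
  fixes p q u w :: real
  assumes "0 \<le> p" "0 \<le> q" "0 \<le> u" "0 \<le> w" "q \<le> p"
  shows "p*q*(p+u+w) + q*(u*w + w*q + p*u) \<le> 4/27*(p+q+u+w)^3"
proof -
  define P where "P = p + u"
  have "p*q*(p+u+w) + q*(u*w + w*q + p*u) = q*(P^2 - u^2 + w*(P+q))"
    by (simp add: P_def power2_eq_square algebra_simps)
  also have "\<dots> \<le> q*(P^2 + w*(2*P))"
  proof -
    have "q \<le> P" using assms P_def by simp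
    hence "w*q \<le> w*P" using assms by (simp add: mult_left_mono)
    moreover have "w*(P+q) = w*P + w*q" "w*(2*P) = w*P + w*P" by (simp_all add: algebra_simps)
    moreover have "0 \<le> u^2" by simp
    ultimately have "P^2 - u^2 + w*(P+q) \<le> P^2 + w*(2*P)" by linarith
    thus ?thesis using assms by (simp add: mult_left_mono)
  qed
  also have "\<dots> = P*q*(P+2*w)" by (simp add: power2_eq_square algebra_simps)
  also have "\<dots> \<le> 4/27*(P+q+w)^3" using key1[of P q w] assms P_def by simp
  also have "P+q+w = p+q+u+w" by (simp add: P_def)
  finally show ?thesis .
qed

lemma cornerK3:
  fixes p q u w :: real
  assumes "0 \<le> p" "0 \<le> q" "0 \<le> u" "0 \<le> w" "q \<le> p"
  shows "p*q*(p+u+w) + q*(u*w + w*p + w*q - p*q) \<le> 4/27*(p+q+u+w)^3"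
proof -
  define P where "P = p + u"
  have e: "p*q*(p+u+w) + q*(u*w + w*p + w*q - p*q) = q*((p*p + p*u) + (2*p*w + u*w) + q*(w-p))"
    by (simp add: algebra_simps)
  have h1: "p*p + p*u \<le> P^2" using assms by (simp add: P_def power2_eq_square algebra_simps)
  have h2: "2*p*w + u*w \<le> 2*P*w" using assms by (simp add: P_def algebra_simps)
  show ?thesis
  proof (cases "w \<le> p")
    case True
    have "q*(w-p) \<le> 0" using True assms by (simp add: mult_nonneg_nonpos)
    hence "(p*p + p*u) + (2*p*w + u*w) + q*(w-p) \<le> P^2 + 2*P*w" using h1 h2 by linarith
    hence "q*((p*p + p*u) + (2*p*w + u*w) + q*(w-p)) \<le> q*(P^2 + 2*P*w)" using assms by (simp add: mult_left_mono)
    also have "\<dots> = P*q*(P+2*w)" by (simp add: power2_eq_square algebra_simps)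
    also have "\<dots> \<le> 4/27*(P+q+w)^3" using key1[of P q w] assms P_def by simp
    also have "P+q+w = p+q+u+w" by (simp add: P_def)
    finally show ?thesis using e by simp
  next
    case False
    have "q*(w-p) \<le> q*w" using assms by (simp add: algebra_simps)
    also have "q*w \<le> w*w" using False assms by (simp add: mult_right_mono)
    finally have "q*(w-p) \<le> w*w" .
    hence "(p*p + p*u) + (2*p*w + u*w) + q*(w-p) \<le> (P+w)^2" using h1 h2
      by (simp add: power2_eq_square algebra_simps)
    hence "q*((p*p + p*u) + (2*p*w + u*w) + q*(w-p)) \<le> q*(P+w)^2" using assms by (simp add: mult_left_mono)
    also have "\<dots> \<le> 4/27*(q+(P+w))^3" using key2[of q "P+w"] assms P_def by simp
    also have "q+(P+w) = p+q+u+w" by (simp add: P_def)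
    finally show ?thesis using e by simp
  qed
qed

lemma D2:
  fixes a b c d u w :: real
  assumes nn: "0 \<le> a" "0 \<le> b" "0 \<le> c" "0 \<le> d" "0 \<le> u" "0 \<le> w"
    and pq: "c + d \<le> a + b" and s1: "a+b+c+d+u+w = 1"
  shows "(a+b)*(c+d)*(u+w) + ((a+b)-(c+d))*((a+b)*(c+d))
         + (c+d)*(a*d + b*c + u*(b+d) + w*(a+c) + u*w) \<le> 4/27"
proof -
  define p q where "p = a+b" and "q = c+d"
  have p0: "0 \<le> p" and q0: "0 \<le> q" and qp: "q \<le> p" using nn pq p_def q_def by auto
  have s: "p+q+u+w = 1" using s1 p_def q_def by simp
  define F where "F = u*(b+d) + w*(a+c) + u*w - a*c - b*d"
  have lhs: "(a+b)*(c+d)*(u+w) + ((a+b)-(c+d))*((a+b)*(c+d))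
         + (c+d)*(a*d + b*c + u*(b+d) + w*(a+c) + u*w) = p*q*(p+u+w) + q*F"
    by (simp add: p_def q_def F_def algebra_simps)
  define \<alpha> \<beta> where "\<alpha> = u - w + q" and "\<beta> = u - w + p"
  have Fe: "F = u*w + w*p + w*q - p*q + (b*\<alpha> + d*\<beta> - 2*b*d)"
    by (simp add: F_def \<alpha>_def \<beta>_def p_def q_def algebra_simps)
  have bp: "b \<le> p" and dq: "d \<le> q" using nn p_def q_def by auto
  have cases4: "F \<le> u*w + w*q + p*u \<or> F \<le> u*w + w*p + q*u
             \<or> F \<le> u*w + w*p + w*q - p*q \<or> F \<le> u*w + u*p + u*q - p*q"
  proof (cases "2*d \<le> \<alpha>")
    case A: True
    show ?thesis
    proof (cases "2*p \<le> \<beta>")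
      case True
      have "0 \<le> (p-b)*(\<alpha>-2*d)" using A bp by simp
      moreover have "0 \<le> (q-d)*(\<beta>-2*p)" using True dq by simp
      moreover have "(p-b)*(\<alpha>-2*d) + (q-d)*(\<beta>-2*p) = p*\<alpha> + q*\<beta> - 2*p*q - (b*\<alpha> + d*\<beta> - 2*b*d)"
        by (simp add: algebra_simps)
      moreover have "u*w + w*p + w*q - p*q + (p*\<alpha> + q*\<beta> - 2*p*q) = u*w + u*p + u*q - p*q"
        by (simp add: \<alpha>_def \<beta>_def algebra_simps)
      ultimately show ?thesis using Fe by linarith
    next
      case False
      have "0 \<le> (p-b)*(\<alpha>-2*d)" using A bp by simp
      moreover have "0 \<le> d*(2*p-\<beta>)" using False nn by simp
      moreover have "(p-b)*(\<alpha>-2*d) + d*(2*p-\<beta>) = p*\<alpha> - (b*\<alpha> + d*\<beta> - 2*b*d)"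
        by (simp add: algebra_simps)
      moreover have "u*w + w*p + w*q - p*q + p*\<alpha> = u*w + w*q + p*u"
        by (simp add: \<alpha>_def algebra_simps)
      ultimately show ?thesis using Fe by linarith
    qed
  next
    case A: False
    show ?thesis
    proof (cases "0 \<le> \<beta>")
      case True
      have "0 \<le> (q-d)*\<beta>" using True dq by simp
      moreover have "0 \<le> b*(2*d-\<alpha>)" using A nn by simp
      moreover have "(q-d)*\<beta> + b*(2*d-\<alpha>) = q*\<beta> - (b*\<alpha> + d*\<beta> - 2*b*d)"
        by (simp add: algebra_simps)
      moreover have "u*w + w*p + w*q - p*q + q*\<beta> = u*w + w*p + q*u"
        by (simp add: \<beta>_def algebra_simps)
      ultimately show ?thesis using Fe by linarith
    next
      case False
      have "0 \<le> d*(-\<beta>)" using False nn by (intro mult_nonneg_nonneg) simp_all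
      moreover have "0 \<le> b*(2*d-\<alpha>)" using A nn by simp
      moreover have "d*(-\<beta>) + b*(2*d-\<alpha>) = - (b*\<alpha> + d*\<beta> - 2*b*d)"
        by (simp add: algebra_simps)
      ultimately show ?thesis using Fe by linarith
    qed
  qed
  have K1: "p*q*(p+u+w) + q*(u*w + w*q + p*u) \<le> 4/27"
    using cornerK1[of p q u w] p0 q0 nn qp s by simp
  have K2: "p*q*(p+u+w) + q*(u*w + w*p + q*u) \<le> 4/27"
    using cornerK1[of p q w u] p0 q0 nn qp s by (simp add: algebra_simps)
  have K3: "p*q*(p+u+w) + q*(u*w + w*p + w*q - p*q) \<le> 4/27"
    using cornerK3[of p q u w] p0 q0 nn qp s by simp
  have K4: "p*q*(p+u+w) + q*(u*w + u*p + u*q - p*q) \<le> 4/27"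
    using cornerK3[of p q w u] p0 q0 nn qp s by (simp add: algebra_simps)
  have "p*q*(p+u+w) + q*F \<le> 4/27"
    using cases4
  proof (elim disjE)
    assume "F \<le> u*w + w*q + p*u"
    hence "q*F \<le> q*(u*w + w*q + p*u)" using q0 by (simp add: mult_left_mono)
    thus ?thesis using K1 by linarith
  next
    assume "F \<le> u*w + w*p + q*u"
    hence "q*F \<le> q*(u*w + w*p + q*u)" using q0 by (simp add: mult_left_mono)
    thus ?thesis using K2 by linarith
  next
    assume "F \<le> u*w + w*p + w*q - p*q"
    hence "q*F \<le> q*(u*w + w*p + w*q - p*q)" using q0 by (simp add: mult_left_mono)
    thus ?thesis using K3 by linarith
  next
    assume "F \<le> u*w + u*p + u*q - p*q"
    hence "q*F \<le> q*(u*w + u*p + u*q - p*q)" using q0 by (simp add: mult_left_mono)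
    thus ?thesis using K4 by linarith
  qed
  thus ?thesis using lhs by simp
qed



lemma sum_triple:
  "(\<Sum>t\<in>(UNIV::triple set). f t) = (\<Sum>k\<in>UNIV. \<Sum>kA\<in>UNIV. \<Sum>kB\<in>UNIV. f (k,kA,kB))"
proof -
  have "(\<Sum>t\<in>(UNIV::triple set). f t) = (\<Sum>t\<in>UNIV \<times> (UNIV \<times> UNIV). f t)"
    by (simp add: UNIV_Times_UNIV)
  also have "\<dots> = (\<Sum>k\<in>UNIV. \<Sum>z\<in>UNIV \<times> UNIV. f (k,z))"
    by (simp add: sum.cartesian_product)
  also have "\<dots> = (\<Sum>k\<in>UNIV. \<Sum>kA\<in>UNIV. \<Sum>kB\<in>UNIV. f (k,kA,kB))"
    by (simp add: sum.cartesian_product)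
  finally show ?thesis .
qed

definition DS :: "(triple \<Rightarrow> real) \<Rightarrow> (triple \<Rightarrow> triple \<Rightarrow> real) \<Rightarrow> real" where
  "DS x g = (\<Sum>t\<in>UNIV. \<Sum>u\<in>UNIV. g t u * (x t * x u))"

lemma pair_sum:
  "(\<Sum>(t, u) \<in> {(t, u). P t u}. x t * x u) = DS x (\<lambda>t u. of_bool (P t u))"
proof -
  have "DS x (\<lambda>t u. of_bool (P t u)) = (\<Sum>t\<in>UNIV. \<Sum>u\<in>UNIV. if P t u then x t * x u else 0)"
    unfolding DS_def by (intro sum.cong refl) simp
  also have "\<dots> = (\<Sum>z\<in>UNIV \<times> UNIV. if P (fst z) (snd z) then x (fst z) * x (snd z) else 0)"
    by (simp add: sum.cartesian_product case_prod_beta)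
  also have "\<dots> = (\<Sum>z\<in>{z \<in> UNIV \<times> UNIV. P (fst z) (snd z)}. x (fst z) * x (snd z))"
    by (simp add: sum.inter_filter[symmetric])
  also have "{z \<in> UNIV \<times> UNIV. P (fst z) (snd z)} = {(t, u). P t u}" by auto
  finally show ?thesis by (simp add: case_prod_beta)
qed

lemma DS_add: "DS x (\<lambda>t u. g t u + h t u) = DS x g + DS x h"
  unfolding DS_def by (simp add: distrib_right sum.distrib)

lemma DS_swap: "DS x g = DS x (\<lambda>t u. g u t)"
  unfolding DS_def by (subst sum.swap) (simp add: mult.commute)

lemma DS_mono:
  assumes "\<And>t u. g t u \<le> h t u" "\<And>t. 0 \<le> x t"
  shows "DS x g \<le> DS x h"
  unfolding DS_def
  by (intro sum_mono mult_right_mono assms mult_nonneg_nonneg)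

lemma DS_zero: "DS x (\<lambda>t u. 0) = 0" unfolding DS_def by simp

definition mass :: "(triple \<Rightarrow> real) \<Rightarrow> (triple \<Rightarrow> bool) \<Rightarrow> real" where
  "mass x Q = (\<Sum>t\<in>UNIV. of_bool (Q t) * x t)"

lemma DS_prod: "DS x (\<lambda>t u. of_bool (Q1 t \<and> Q2 u)) = mass x Q1 * mass x Q2"
  unfolding DS_def mass_def sum_product
  by (intro sum.cong refl) (simp add: algebra_simps)

lemma mass_nonneg: "(\<And>t. 0 \<le> x t) \<Longrightarrow> 0 \<le> mass x Q"
  unfolding mass_def by (intro sum_nonneg) simp

lemma mass_split: "mass x (\<lambda>t. P t \<and> Q t) + mass x (\<lambda>t. \<not> P t \<and> Q t) = mass x Q"
  unfolding mass_def sum.distrib[symmetric] by (intro sum.cong refl) simp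

lemma mass_True: "mass x (\<lambda>t. True) = (\<Sum>t\<in>UNIV. x t)"
  unfolding mass_def by simp

lemma mass_fst3: "mass x (\<lambda>t. fst t = LA) + mass x (\<lambda>t. fst t = LB) + mass x (\<lambda>t. fst t = LX)
   = (\<Sum>t\<in>UNIV. x t)"
proof -
  have "\<And>t::triple. of_bool (fst t = LA) * x t + of_bool (fst t = LB) * x t + of_bool (fst t = LX) * x t = x t"
    by (case_tac "fst t") simp_all
  thus ?thesis unfolding mass_def sum.distrib[symmetric] by (intro sum.cong refl) simp
qed

lemma sum_delta_of_bool: "(\<Sum>k\<in>UNIV. of_bool (k = m) * g k) = (g (m::lab)::real)"
proof -
  have "(\<Sum>k\<in>UNIV. of_bool (k = m) * g k) = (\<Sum>k\<in>UNIV. if k = m then g k else 0)"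
    by (intro sum.cong) auto
  thus ?thesis by (simp add: sum.delta)
qed

lemma s_sum_mass: "s_sum x m = mass x (\<lambda>t. fst t = m)"
proof -
  have "mass x (\<lambda>t. fst t = m) = (\<Sum>k\<in>UNIV. \<Sum>kA\<in>UNIV. \<Sum>kB\<in>UNIV. of_bool (k = m) * x (k,kA,kB))"
    unfolding mass_def by (subst sum_triple) simp
  also have "\<dots> = (\<Sum>k\<in>UNIV. of_bool (k = m) * (\<Sum>kA\<in>UNIV. \<Sum>kB\<in>UNIV. x (k,kA,kB)))"
    by (simp add: sum_distrib_left)
  also have "\<dots> = (\<Sum>kA\<in>UNIV. \<Sum>kB\<in>UNIV. x (m,kA,kB))"
    by (rule sum_delta_of_bool)
  finally show ?thesis unfolding s_sum_def by simp
qed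



definition Utype :: "triple \<Rightarrow> bool" where
  "Utype t \<longleftrightarrow> snd t \<in> {(LA,LB),(LA,LX),(LX,LB),(LX,LX)}"

definition PR :: "triple \<Rightarrow> triple \<Rightarrow> bool" where
  "PR t u \<longleftrightarrow> arrow t u \<and> fst (snd t) = LA \<and> fst (snd u) = LB"
definition PS :: "triple \<Rightarrow> triple \<Rightarrow> bool" where
  "PS t u \<longleftrightarrow> arrow t u \<and> snd (snd t) = LA \<and> snd (snd u) = LB"

definition ecomb :: "triple \<Rightarrow> triple \<Rightarrow> real" where
  "ecomb t u =
     of_bool ((Utype t \<and> fst t = LA) \<and> (\<not> Utype u \<and> fst u = LB))
   + of_bool ((\<not> Utype t \<and> fst t = LA) \<and> (Utype u \<and> fst u = LB))
   + of_bool ((Utype t \<and> fst t = LX) \<and> (\<not> Utype u \<and> fst u = LA))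
   + of_bool ((Utype t \<and> fst t = LX) \<and> (\<not> Utype u \<and> fst u = LB))
   + of_bool ((\<not> Utype t \<and> fst t = LX) \<and> (Utype u \<and> fst u = LA))
   + of_bool ((\<not> Utype t \<and> fst t = LX) \<and> (Utype u \<and> fst u = LB))
   + of_bool ((Utype t \<and> fst t = LX) \<and> (\<not> Utype u \<and> fst u = LX))"

lemma pointwise_lab:
  fixes k a b l a' b' :: lab
  shows "of_bool (PR (k,a,b) (l,a',b')) + of_bool (PS (k,a,b) (l,a',b'))
       + of_bool (PR (l,a',b') (k,a,b)) + of_bool (PS (l,a',b') (k,a,b))
       \<le> ecomb (k,a,b) (l,a',b') + ecomb (l,a',b') (k,a,b)"
  by (cases k; cases a; cases b; cases l; cases a'; cases b';
      simp add: PR_def PS_def arrow_def ok_def ecomb_def Utype_def)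

lemma pointwise:
  "of_bool (PR t u) + of_bool (PS t u) + of_bool (PR u t) + of_bool (PS u t) \<le> ecomb t u + ecomb u t"
  using pointwise_lab[of "fst t" "fst (snd t)" "snd (snd t)" "fst u" "fst (snd u)" "snd (snd u)"]
  by simp



lemma upper_bound:
  assumes fe: "feasible x"
  shows "objective x \<le> 4/27"
proof -
  have nn: "\<And>t. 0 \<le> x t" and s1: "(\<Sum>t\<in>UNIV. x t) = 1" using fe by (auto simp: feasible_def)
  define p q r where "p = s_sum x LA" and "q = s_sum x LB" and "r = s_sum x LX"
  define a b c d u w where
    "a = mass x (\<lambda>t. Utype t \<and> fst t = LA)" and "b = mass x (\<lambda>t. \<not> Utype t \<and> fst t = LA)" and
    "c = mass x (\<lambda>t. Utype t \<and> fst t = LB)" and "d = mass x (\<lambda>t. \<not> Utype t \<and> fst t = LB)" and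
    "u = mass x (\<lambda>t. Utype t \<and> fst t = LX)" and "w = mass x (\<lambda>t. \<not> Utype t \<and> fst t = LX)"
  have ab: "a + b = p" and cd: "c + d = q" and uw: "u + w = r"
    unfolding a_def b_def c_def d_def u_def w_def p_def q_def r_def s_sum_mass
    by (rule mass_split)+
  have nn6: "0 \<le> a" "0 \<le> b" "0 \<le> c" "0 \<le> d" "0 \<le> u" "0 \<le> w"
    unfolding a_def b_def c_def d_def u_def w_def using nn by (simp_all add: mass_nonneg)
  have pqr: "p + q + r = 1"
    unfolding p_def q_def r_def s_sum_mass using mass_fst3[of x] s1 by simp
  define T R S where "T = T_sum x" and "R = R_sum x" and "S = S_sum x"
  have TD: "T = DS x (\<lambda>t u. of_bool (arrow t u \<and> fst t = LA \<and> fst u = LB))"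
    unfolding T_def T_sum_def by (rule pair_sum)
  have RD: "R = DS x (\<lambda>t u. of_bool (PR t u))"
    unfolding R_def R_sum_def PR_def by (rule pair_sum)
  have SD: "S = DS x (\<lambda>t u. of_bool (PS t u))"
    unfolding S_def S_sum_def PS_def by (rule pair_sum)
  have T0: "0 \<le> T" unfolding TD using DS_mono[of "\<lambda>t u. 0" _ x] nn DS_zero by (simp add: DS_zero)
  have R0: "0 \<le> R" unfolding RD using DS_mono[of "\<lambda>t u. 0" _ x] nn by (simp add: DS_zero)
  have S0: "0 \<le> S" unfolding SD using DS_mono[of "\<lambda>t u. 0" _ x] nn by (simp add: DS_zero)
  have Tpq: "T \<le> p * q"
  proof -
    have "T \<le> DS x (\<lambda>t u. of_bool (fst t = LA \<and> fst u = LB))"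
      unfolding TD by (rule DS_mono) (simp_all add: nn)
    also have "\<dots> = p * q" unfolding p_def q_def s_sum_mass by (rule DS_prod)
    finally show ?thesis .
  qed
  define E where "E = a*d + b*c + u*(b+d) + w*(a+c) + u*w"
  have ED: "DS x ecomb = E"
    unfolding ecomb_def E_def DS_add DS_prod a_def b_def c_def d_def u_def w_def
    by (simp add: algebra_simps)
  have RSE: "R + S \<le> E"
  proof -
    have "2*(R + S) = DS x (\<lambda>t u. of_bool (PR t u) + of_bool (PS t u) + of_bool (PR u t) + of_bool (PS u t))"
    proof -
      have "DS x (\<lambda>t u. of_bool (PR u t)) = R" unfolding RD by (rule DS_swap[symmetric])
      moreover have "DS x (\<lambda>t u. of_bool (PS u t)) = S" unfolding SD by (rule DS_swap[symmetric])
      ultimately show ?thesis unfolding DS_add RD SD by simp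
    qed
    also have "\<dots> \<le> DS x (\<lambda>t u. ecomb t u + ecomb u t)"
      by (rule DS_mono) (simp_all add: nn pointwise)
    also have "\<dots> = 2*E" unfolding DS_add DS_swap[of x "\<lambda>t u. ecomb u t"] ED by simp
    finally show ?thesis by simp
  qed
  define m1 m2 where "m1 = min T R" and "m2 = min T S"
  have obj: "objective x = r*T + p*m1 + q*m2"
    unfolding objective_def m1_def m2_def p_def q_def r_def T_def R_def S_def by simp
  have m1T: "m1 \<le> T" and m2T: "m2 \<le> T" and m12: "m1 + m2 \<le> E"
    using RSE by (auto simp: m1_def m2_def)
  have m10: "0 \<le> m1" and m20: "0 \<le> m2" using T0 R0 S0 by (auto simp: m1_def m2_def)
  have p0: "0 \<le> p" and q0: "0 \<le> q" and r0: "0 \<le> r" using nn6 ab cd uw by auto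
  have rT: "r*T \<le> r*(p*q)" using Tpq r0 by (simp add: mult_left_mono)
  show ?thesis
  proof (cases "q \<le> p")
    case True
    have "p*m1 + q*m2 = (p-q)*m1 + q*(m1+m2)" by (simp add: algebra_simps)
    moreover have "(p-q)*m1 \<le> (p-q)*(p*q)" using True m1T Tpq by (intro mult_left_mono) auto
    moreover have "q*(m1+m2) \<le> q*E" using q0 m12 by (simp add: mult_left_mono)
    moreover have "(a+b)*(c+d)*(u+w) + ((a+b)-(c+d))*((a+b)*(c+d))
         + (c+d)*(a*d + b*c + u*(b+d) + w*(a+c) + u*w) \<le> 4/27"
      by (rule D2) (use nn6 True ab cd uw pqr in auto)
    hence "r*(p*q) + (p-q)*(p*q) + q*E \<le> 4/27"
      unfolding E_def ab cd uw by (simp add: algebra_simps)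
    ultimately show ?thesis using obj rT by linarith
  next
    case False
    have "p*m1 + q*m2 = (q-p)*m2 + p*(m1+m2)" by (simp add: algebra_simps)
    moreover have "(q-p)*m2 \<le> (q-p)*(p*q)" using False m2T Tpq by (intro mult_left_mono) auto
    moreover have "p*(m1+m2) \<le> p*E" using p0 m12 by (simp add: mult_left_mono)
    moreover have "(c+d)*(a+b)*(u+w) + ((c+d)-(a+b))*((c+d)*(a+b))
         + (a+b)*(c*b + d*a + u*(d+b) + w*(c+a) + u*w) \<le> 4/27"
      by (rule D2) (use nn6 False ab cd uw pqr in auto)
    hence "r*(p*q) + (q-p)*(p*q) + p*E \<le> 4/27"
      unfolding E_def ab cd uw by (simp add: algebra_simps)
    ultimately show ?thesis using obj rT by linarith
  qed
qed

lemma DS_support: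
  assumes "\<And>t. t \<notin> A \<Longrightarrow> x t = 0"
  shows "DS x g = (\<Sum>t\<in>A. \<Sum>u\<in>A. g t u * (x t * x u))"
proof -
  have "DS x g = (\<Sum>t\<in>UNIV. \<Sum>u\<in>A. g t u * (x t * x u))"
    unfolding DS_def by (intro sum.cong refl sum.mono_neutral_right) (auto simp: assms)
  also have "\<dots> = (\<Sum>t\<in>A. \<Sum>u\<in>A. g t u * (x t * x u))"
    by (intro sum.mono_neutral_right) (auto simp: assms)
  finally show ?thesis .
qed

definition x0 :: "triple \<Rightarrow> real" where
  "x0 t = (if t = (LA,LA,LX) then 2/3 else 0) + (if t = (LB,LB,LX) then 1/3 else 0)"

lemma x0_supp: "t \<notin> {(LA,LA,LX),(LB,LB,LX)} \<Longrightarrow> x0 t = 0"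
  by (auto simp: x0_def)

lemma x0_feasible: "feasible x0"
proof -
  have "(\<Sum>t\<in>UNIV. x0 t) = 2/3 + 1/3"
    unfolding x0_def sum.distrib by simp
  thus ?thesis unfolding feasible_def by (auto simp: x0_def)
qed

lemma x0_obj: "objective x0 = 4/27"
proof -
  have T: "T_sum x0 = 2/9"
    unfolding T_sum_def pair_sum
    by (subst DS_support[where A="{(LA,LA,LX),(LB,LB,LX)}"], erule x0_supp)
       (simp add: arrow_def ok_def x0_def)
  have R: "R_sum x0 = 2/9"
    unfolding R_sum_def pair_sum
    by (subst DS_support[where A="{(LA,LA,LX),(LB,LB,LX)}"], erule x0_supp)
       (simp add: arrow_def ok_def x0_def)
  have S: "S_sum x0 = 0"
    unfolding S_sum_def pair_sum
    by (subst DS_support[where A="{(LA,LA,LX),(LB,LB,LX)}"], erule x0_supp)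
       (simp add: arrow_def ok_def x0_def)
  have sA: "s_sum x0 LA = 2/3" and sB: "s_sum x0 LB = 1/3" and sX: "s_sum x0 LX = 0"
    unfolding s_sum_def by (simp_all add: UNIV_lab x0_def)
  show ?thesis unfolding objective_def T R S sA sB sX by simp
qed

theorem theorem6p4:
  shows "(\<exists>x. feasible x \<and> objective x = 4/27) \<and> (\<forall>x. feasible x \<longrightarrow> objective x \<le> 4/27)"
  using x0_feasible x0_obj upper_bound by blast


end
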